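(* The least fixed point $(T_\infty,P_\infty)$ of $\Gamma_{\mathscr{TP}}$ (the stage at which the sequence $(T_\alpha,P_\alpha)$ stabilizes) is consistent, i.e. $T_\infty^+\cap T_\infty^-=\emptyset$ and $P_\infty^+\cap P_\infty^-=\emptyset$, and (hence) sound, i.e. for every $\mathcal L$-sentence $\varphi$, either $(\mathbb N,T_\infty,P_\infty)\not\models_{SK}\varphi\vee\neg\varphi$ or $(\mathbb N,T_\infty,P_\infty)\not\models_{SK}\mathscr P(\varphi)$.
   Context: Language. Let $\mathcal L_{\mathbb N}$ be the language of first-order Peano arithmetic and $\mathcal L=\mathcal L_{\mathbb N}\cup\{\mathrm T,\mathrm P\}$ with unary predicates $\mathrm T,\mathrm P$. $\mathcal L$-formulas are in Tait style: literals are $s=t$, $s\neq t$, $\mathrm Tt$, $\neg\mathrm Tt$, $\mathrm Pt$, $\neg\mathrm Pt$; formulas are built from literals by $\wedge,\vee,\forall,\exists$; negation of an arbitrary formula is defined by De Morgan dualities with $\neg\neg\varphi:=\varphi$. A standard Gödel numbering is fixed; $\#e$ is the code of $e$, $\ulcorner e\urcorner$ the numeral of $\#e$, $\mathrm{val}(t)$ the value of a closed term $t$, $\dot\neg$ the primitive recursive function with $\dot\neg(\#\varphi)=\#\neg\varphi$; $\mathrm T\varphi,\mathrm P\varphi$ abbreviate $\mathrm T\ulcorner\varphi\urcorner,\mathrm P\ulcorner\varphi\urcorner$. Semantics. A partial model is $(\mathbb N,T,P)$ with $\mathbb N$ the standard model and $T=(T^+,T^-)$, $P=(P^+,P^-)$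 pairs of subsets of $\omega$. Strong Kleene satisfaction $\models_{SK}$: arithmetic literals evaluated in $\mathbb N$; $\mathrm Tt$ satisfied iff $\mathrm{val}(t)\in T^+$, $\neg\mathrm Tt$ iff $\mathrm{val}(t)\in T^-$, likewise for $\mathrm P$ with $P^\pm$; conjunction iff both, disjunction iff at least one, $\forall x\varphi(x)$ iff all numeral instances, $\exists x\varphi(x)$ iff some numeral instance. Base paradoxicality. $\mathrm{PA}[\mathrm{SK}]$ is the two-sided sequent calculus for Strong Kleene logic with identity in $\mathcal L$ (initial sequents $\varphi\Rightarrow\varphi$, cut, weakening, the rule from $\Gamma\Rightarrow\Delta,\varphi$ infer $\neg\varphi,\Gamma\Rightarrow\Delta$, usual rules for $\wedge,\vee,\forall,\exists$, reflexivity $\Rightarrow t=t$, replacement from $\Gamma\Rightarrow\Delta,\varphi(t)$ infer $\Gamma\Rightarrow\Delta,s\neq t,\varphi(s)$) plus the initial sequents of Peano arithmetic and the induction rule for all $\mathcal L$-formulas. A sentence $\varphi$ is base paradoxical iff $\mathrm{PA}[\mathrm{SK}]$ derives $\varphi\Leftrightarrow\neg\mathrm T\varphi$ and $\neg\varphi\Leftrightarrow\mathrm T\varphi$ ($\Leftrightarrow$ meaning both sequents). $B(x)$ is an $\mathcal L_{\mathbb N}$-formula defining in $\mathbb N$ the set of codes of base paradoxical sentences, and $\Pi(x):=B(x)\vee B(\dot\neg x)$. Jump and sequence. Let $\mathscr P(x)$ be the $\mathcal L$-formula which is the disjunction of: (1) $x$ codes a sentence and $\Pi(x)$; (2) $x$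 codes a sentence $\mathrm Tt$ ($t$ a closed term) and $\mathrm P(\mathrm{val}(t))$; (3) $x$ codes a sentence $\neg\mathrm Tt$ and $\mathrm P(\mathrm{val}(t))$; (4) $x$ codes a sentence $\psi\wedge\theta$ and $(\mathrm P\psi\wedge\mathrm P\theta)\vee(\mathrm T\psi\wedge\mathrm P\theta)\vee(\mathrm T\theta\wedge\mathrm P\psi)$; (5) $x$ codes a sentence $\psi\vee\theta$ and $(\mathrm P\psi\wedge\mathrm P\theta)\vee(\neg\mathrm T\psi\wedge\mathrm P\theta)\vee(\neg\mathrm T\theta\wedge\mathrm P\psi)$; (6) $x$ codes a sentence $\forall v\psi$ and $\exists y\,\mathrm P\psi(\dot y)\wedge\forall y(\mathrm P\psi(\dot y)\vee\mathrm T\psi(\dot y))$; (7) $x$ codes a sentence $\exists v\psi$ and $\exists y\,\mathrm P\psi(\dot y)\wedge\forall y(\mathrm P\psi(\dot y)\vee\neg\mathrm T\psi(\dot y))$; here $\psi(\dot y)$ is the code of the result of substituting the numeral of $y$ for $v$. Write $\mathscr P(\varphi)$ for $\mathscr P(\ulcorner\varphi\urcorner)$. Define $\Gamma_{\mathscr{TP}}(T,P)=\big((\{\#\varphi:(\mathbb N,T,P)\models_{SK}\varphi\},\{\#\varphi:(\mathbb N,T,P)\models_{SK}\neg\varphi\}),(\{\#\varphi:(\mathbb N,T,P)\models_{SK}\mathscr P(\varphi)\},\{\#\varphi:(\mathbb N,T,P)\models_{SK}\varphi\vee\neg\varphi\})\big)$, $\varphi$ ranging over $\mathcal L$-sentences.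 Define $(T_0,P_0)=((\emptyset,\emptyset),(\emptyset,\emptyset))$, $(T_{\beta+1},P_{\beta+1})=\Gamma_{\mathscr{TP}}(T_\beta,P_\beta)$, $(T_\lambda,P_\lambda)=\bigcup_{\beta<\lambda}(T_\beta,P_\beta)$ (componentwise union) for limit $\lambda$. This sequence reaches a fixed point $(T_\infty,P_\infty)=\Gamma_{\mathscr{TP}}(T_\infty,P_\infty)$. *)

theory Defs
  imports Main "HOL-Library.Product_Order"
begin

section \<open>Syntax of L = L_N + {T, P} (locally nameless, Tait style)\<close>

text \<open>Terms of the language of PA: free variables Fv, bound variables Bv (de Bruijn
indices), 0, successor, addition, multiplication.\<close>
datatype tm = Fv nat | Bv nat | Zero | Sc tm | Pl tm tm | Tm tm tm

text \<open>Tait-style formulas: literals, conjunction, disjunction, quantifiers.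
Tr = T, NTr = not T, Pr = P, NPr = not P.\<close>
datatype fm = Eq tm tm | Neq tm tm | Tr tm | NTr tm | Pr tm | NPr tm
  | Conj fm fm | Disj fm fm | All fm | Ex fm

primrec neg :: "fm \<Rightarrow> fm" where
  "neg (Eq s t) = Neq s t"
| "neg (Neq s t) = Eq s t"
| "neg (Tr t) = NTr t"
| "neg (NTr t) = Tr t"
| "neg (Pr t) = NPr t"
| "neg (NPr t) = Pr t"
| "neg (Conj a b) = Disj (neg a) (neg b)"
| "neg (Disj a b) = Conj (neg a) (neg b)"
| "neg (All a) = Ex (neg a)"
| "neg (Ex a) = All (neg a)"

primrec openT :: "nat \<Rightarrow> tm \<Rightarrow> tm \<Rightarrow> tm" where
  "openT k u (Fv x) = Fv x"
| "openT k u (Bv i) = (if i = k then u else Bv i)"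
| "openT k u Zero = Zero"
| "openT k u (Sc t) = Sc (openT k u t)"
| "openT k u (Pl s t) = Pl (openT k u s) (openT k u t)"
| "openT k u (Tm s t) = Tm (openT k u s) (openT k u t)"

primrec openF :: "nat \<Rightarrow> tm \<Rightarrow> fm \<Rightarrow> fm" where
  "openF k u (Eq s t) = Eq (openT k u s) (openT k u t)"
| "openF k u (Neq s t) = Neq (openT k u s) (openT k u t)"
| "openF k u (Tr t) = Tr (openT k u t)"
| "openF k u (NTr t) = NTr (openT k u t)"
| "openF k u (Pr t) = Pr (openT k u t)"
| "openF k u (NPr t) = NPr (openT k u t)"
| "openF k u (Conj a b) = Conj (openF k u a) (openF k u b)"
| "openF k u (Disj a b) = Disj (openF k u a) (openF k u b)"
| "openF k u (All a) = All (openF (Suc k) u a)"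
| "openF k u (Ex a) = Ex (openF (Suc k) u a)"

primrec lcT :: "nat \<Rightarrow> tm \<Rightarrow> bool" where
  "lcT n (Fv x) = True"
| "lcT n (Bv i) = (i < n)"
| "lcT n Zero = True"
| "lcT n (Sc t) = lcT n t"
| "lcT n (Pl s t) = (lcT n s \<and> lcT n t)"
| "lcT n (Tm s t) = (lcT n s \<and> lcT n t)"

primrec lcF :: "nat \<Rightarrow> fm \<Rightarrow> bool" where
  "lcF n (Eq s t) = (lcT n s \<and> lcT n t)"
| "lcF n (Neq s t) = (lcT n s \<and> lcT n t)"
| "lcF n (Tr t) = lcT n t"
| "lcF n (NTr t) = lcT n t"
| "lcF n (Pr t) = lcT n t"
| "lcF n (NPr t) = lcT n t"
| "lcF n (Conj a b) = (lcF n a \<and> lcF n b)"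
| "lcF n (Disj a b) = (lcF n a \<and> lcF n b)"
| "lcF n (All a) = lcF (Suc n) a"
| "lcF n (Ex a) = lcF (Suc n) a"

primrec fvT :: "tm \<Rightarrow> nat set" where
  "fvT (Fv x) = {x}"
| "fvT (Bv i) = {}"
| "fvT Zero = {}"
| "fvT (Sc t) = fvT t"
| "fvT (Pl s t) = fvT s \<union> fvT t"
| "fvT (Tm s t) = fvT s \<union> fvT t"

primrec fvF :: "fm \<Rightarrow> nat set" where
  "fvF (Eq s t) = fvT s \<union> fvT t"
| "fvF (Neq s t) = fvT s \<union> fvT t"
| "fvF (Tr t) = fvT t"
| "fvF (NTr t) = fvT t"
| "fvF (Pr t) = fvT t"
| "fvF (NPr t) = fvT t"
| "fvF (Conj a b) = fvF a \<union> fvF b"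
| "fvF (Disj a b) = fvF a \<union> fvF b"
| "fvF (All a) = fvF a"
| "fvF (Ex a) = fvF a"

definition closed_tm :: "tm \<Rightarrow> bool" where
  "closed_tm t \<longleftrightarrow> lcT 0 t \<and> fvT t = {}"

definition sentence :: "fm \<Rightarrow> bool" where
  "sentence \<phi> \<longleftrightarrow> lcF 0 \<phi> \<and> fvF \<phi> = {}"

primrec num :: "nat \<Rightarrow> tm" where
  "num 0 = Zero"
| "num (Suc n) = Sc (num n)"

primrec val :: "tm \<Rightarrow> nat" where
  "val (Fv x) = 0"
| "val (Bv i) = 0"
| "val Zero = 0"
| "val (Sc t) = Suc (val t)"
| "val (Pl s t) = val s + val t"
| "val (Tm s t) = val s * val t"

text \<open>A partial model is given by ((T+, T-), (P+, P-)).\<close>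
type_synonym pmodel = "(nat set \<times> nat set) \<times> (nat set \<times> nat set)"

primrec fsize :: "fm \<Rightarrow> nat" where
  "fsize (Eq s t) = 1"
| "fsize (Neq s t) = 1"
| "fsize (Tr t) = 1"
| "fsize (NTr t) = 1"
| "fsize (Pr t) = 1"
| "fsize (NPr t) = 1"
| "fsize (Conj a b) = Suc (fsize a + fsize b)"
| "fsize (Disj a b) = Suc (fsize a + fsize b)"
| "fsize (All a) = Suc (fsize a)"
| "fsize (Ex a) = Suc (fsize a)"

lemma fsize_openF [simp]: "fsize (openF k u \<phi>) = fsize \<phi>"
  by (induction \<phi> arbitrary: k) auto

function sat :: "pmodel \<Rightarrow> fm \<Rightarrow> bool" where
  "sat M (Eq s t) = (val s = val t)"
| "sat M (Neq s t) = (val s \<noteq> val t)"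
| "sat M (Tr t) = (val t \<in> fst (fst M))"
| "sat M (NTr t) = (val t \<in> snd (fst M))"
| "sat M (Pr t) = (val t \<in> fst (snd M))"
| "sat M (NPr t) = (val t \<in> snd (snd M))"
| "sat M (Conj a b) = (sat M a \<and> sat M b)"
| "sat M (Disj a b) = (sat M a \<or> sat M b)"
| "sat M (All a) = (\<forall>n. sat M (openF 0 (num n) a))"
| "sat M (Ex a) = (\<exists>n. sat M (openF 0 (num n) a))"
  by pat_completeness auto
termination
  by (relation "measure (\<lambda>(M, \<phi>). fsize \<phi>)") auto

definition fvs :: "fm set \<Rightarrow> nat set" where
  "fvs S = (\<Union>\<phi>\<in>S. fvF \<phi>)"

definition lcs :: "fm set \<Rightarrow> bool" where
  "lcs S \<longleftrightarrow> (\<forall>\<phi>\<in>S. lcF 0 \<phi>)"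

text \<open>deriv G D: the sequent G \<Rightarrow> D is derivable in PA[SK]. Sequents are finite sets
(exchange and contraction are built in). A formula \<phi>(x) with a distinguished
variable x is represented by a body \<phi> with bound index 0; \<phi>(t) is openF 0 t \<phi>.\<close>
inductive deriv :: "fm set \<Rightarrow> fm set \<Rightarrow> bool" where
  ax: "lcF 0 \<phi> \<Longrightarrow> deriv {\<phi>} {\<phi>}"
| weak: "deriv G D \<Longrightarrow> G \<subseteq> G' \<Longrightarrow> D \<subseteq> D' \<Longrightarrow> finite G' \<Longrightarrow> finite D'
          \<Longrightarrow> lcs G' \<Longrightarrow> lcs D' \<Longrightarrow> deriv G' D'"
| cut: "deriv G (insert \<phi> D) \<Longrightarrow> deriv (insert \<phi> G) D \<Longrightarrow> deriv G D"
| negl: "deriv G (insert \<phi> D) \<Longrightarrow> deriv (insert (neg \<phi>) G) D"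
| conjl1: "deriv (insert a G) D \<Longrightarrow> lcF 0 b \<Longrightarrow> deriv (insert (Conj a b) G) D"
| conjl2: "deriv (insert b G) D \<Longrightarrow> lcF 0 a \<Longrightarrow> deriv (insert (Conj a b) G) D"
| conjr: "deriv G (insert a D) \<Longrightarrow> deriv G (insert b D) \<Longrightarrow> deriv G (insert (Conj a b) D)"
| disjl: "deriv (insert a G) D \<Longrightarrow> deriv (insert b G) D \<Longrightarrow> deriv (insert (Disj a b) G) D"
| disjr1: "deriv G (insert a D) \<Longrightarrow> lcF 0 b \<Longrightarrow> deriv G (insert (Disj a b) D)"
| disjr2: "deriv G (insert b D) \<Longrightarrow> lcF 0 a \<Longrightarrow> deriv G (insert (Disj a b) D)"
| alll: "deriv (insert (openF 0 t \<phi>) G) D \<Longrightarrow> lcT 0 t \<Longrightarrow> lcF 1 \<phi>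
          \<Longrightarrow> deriv (insert (All \<phi>) G) D"
| allr: "deriv G (insert (openF 0 (Fv x) \<phi>) D) \<Longrightarrow> x \<notin> fvF \<phi> \<Longrightarrow> x \<notin> fvs G \<Longrightarrow> x \<notin> fvs D
          \<Longrightarrow> deriv G (insert (All \<phi>) D)"
| exl: "deriv (insert (openF 0 (Fv x) \<phi>) G) D \<Longrightarrow> x \<notin> fvF \<phi> \<Longrightarrow> x \<notin> fvs G \<Longrightarrow> x \<notin> fvs D
          \<Longrightarrow> deriv (insert (Ex \<phi>) G) D"
| exr: "deriv G (insert (openF 0 t \<phi>) D) \<Longrightarrow> lcT 0 t \<Longrightarrow> lcF 1 \<phi>
          \<Longrightarrow> deriv G (insert (Ex \<phi>) D)"
| refl: "lcT 0 t \<Longrightarrow> deriv {} {Eq t t}"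
| repl: "deriv G (insert (openF 0 t \<phi>) D) \<Longrightarrow> lcT 0 s \<Longrightarrow> lcF 1 \<phi>
          \<Longrightarrow> deriv G (insert (Neq s t) (insert (openF 0 s \<phi>) D))"
| pa_sc0: "lcT 0 s \<Longrightarrow> deriv {} {Neq (Sc s) Zero}"
| pa_scinj: "lcT 0 s \<Longrightarrow> lcT 0 t \<Longrightarrow> deriv {Eq (Sc s) (Sc t)} {Eq s t}"
| pa_pl0: "lcT 0 s \<Longrightarrow> deriv {} {Eq (Pl s Zero) s}"
| pa_plsc: "lcT 0 s \<Longrightarrow> lcT 0 t \<Longrightarrow> deriv {} {Eq (Pl s (Sc t)) (Sc (Pl s t))}"
| pa_tm0: "lcT 0 s \<Longrightarrow> deriv {} {Eq (Tm s Zero) Zero}"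
| pa_tmsc: "lcT 0 s \<Longrightarrow> lcT 0 t \<Longrightarrow> deriv {} {Eq (Tm s (Sc t)) (Pl (Tm s t) s)}"
| pa_lem: "lcT 0 s \<Longrightarrow> lcT 0 t \<Longrightarrow> deriv {} {Eq s t, Neq s t}"
| ind: "deriv (insert (openF 0 (Fv x) \<phi>) G) (insert (openF 0 (Sc (Fv x)) \<phi>) D)
          \<Longrightarrow> x \<notin> fvF \<phi> \<Longrightarrow> x \<notin> fvs G \<Longrightarrow> x \<notin> fvs D \<Longrightarrow> lcT 0 t
          \<Longrightarrow> deriv (insert (openF 0 Zero \<phi>) G) (insert (openF 0 t \<phi>) D)"

text \<open>gn is the (fixed) Goedel numbering; T\<phi> abbreviates Tr (num (gn \<phi>)).\<close>
definition base_paradoxical :: "(fm \<Rightarrow> nat) \<Rightarrow> fm \<Rightarrow> bool" where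
  "base_paradoxical gn \<phi> \<longleftrightarrow> sentence \<phi>
     \<and> deriv {\<phi>} {NTr (num (gn \<phi>))} \<and> deriv {NTr (num (gn \<phi>))} {\<phi>}
     \<and> deriv {neg \<phi>} {Tr (num (gn \<phi>))} \<and> deriv {Tr (num (gn \<phi>))} {neg \<phi>}"

text \<open>satP gn M \<phi>: (N,T,P) satisfies (Strong Kleene) the L-formula \<P>(\<ulcorner>\<phi>\<urcorner>), written
out clause by clause. Arithmetical parts (coding facts and \<Pi>) are evaluated in N;
\<Pi>(#\<phi>) holds iff \<phi> or \<not>\<phi> is base paradoxical.\<close>
definition satP :: "(fm \<Rightarrow> nat) \<Rightarrow> pmodel \<Rightarrow> fm \<Rightarrow> bool" where
  "satP gn M \<phi> \<longleftrightarrow> sentence \<phi> \<and>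
    (let Tp = fst (fst M); Tn = snd (fst M); Pp = fst (snd M) in
      (base_paradoxical gn \<phi> \<or> base_paradoxical gn (neg \<phi>))
    \<or> (\<exists>t. \<phi> = Tr t \<and> val t \<in> Pp)
    \<or> (\<exists>t. \<phi> = NTr t \<and> val t \<in> Pp)
    \<or> (\<exists>a b. \<phi> = Conj a b \<and>
         ((gn a \<in> Pp \<and> gn b \<in> Pp) \<or> (gn a \<in> Tp \<and> gn b \<in> Pp) \<or> (gn b \<in> Tp \<and> gn a \<in> Pp)))
    \<or> (\<exists>a b. \<phi> = Disj a b \<and>
         ((gn a \<in> Pp \<and> gn b \<in> Pp) \<or> (gn a \<in> Tn \<and> gn b \<in> Pp) \<or> (gn b \<in> Tn \<and> gn a \<in> Pp)))
    \<or> (\<exists>a. \<phi> = All a \<and> (\<exists>y. gn (openF 0 (num y) a) \<in> Pp)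
         \<and> (\<forall>y. gn (openF 0 (num y) a) \<in> Pp \<or> gn (openF 0 (num y) a) \<in> Tp))
    \<or> (\<exists>a. \<phi> = Ex a \<and> (\<exists>y. gn (openF 0 (num y) a) \<in> Pp)
         \<and> (\<forall>y. gn (openF 0 (num y) a) \<in> Pp \<or> gn (openF 0 (num y) a) \<in> Tn)))"

definition codes :: "(fm \<Rightarrow> nat) \<Rightarrow> (fm \<Rightarrow> bool) \<Rightarrow> nat set" where
  "codes gn Q = {gn \<phi> | \<phi>. sentence \<phi> \<and> Q \<phi>}"

definition GammaTP :: "(fm \<Rightarrow> nat) \<Rightarrow> pmodel \<Rightarrow> pmodel" where
  "GammaTP gn M =
     ((codes gn (\<lambda>\<phi>. sat M \<phi>), codes gn (\<lambda>\<phi>. sat M (neg \<phi>))),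
      (codes gn (\<lambda>\<phi>. satP gn M \<phi>), codes gn (\<lambda>\<phi>. sat M (Disj \<phi> (neg \<phi>)))))"

end

theory Submission
  imports Defs
begin


primrec evalT :: "nat list \<Rightarrow> (nat \<Rightarrow> nat) \<Rightarrow> tm \<Rightarrow> nat" where
  "evalT bs e (Fv x) = e x"
| "evalT bs e (Bv i) = (if i < length bs then bs ! i else 0)"
| "evalT bs e Zero = 0"
| "evalT bs e (Sc t) = Suc (evalT bs e t)"
| "evalT bs e (Pl s t) = evalT bs e s + evalT bs e t"
| "evalT bs e (Tm s t) = evalT bs e s * evalT bs e t"

primrec sem :: "pmodel \<Rightarrow> (nat \<Rightarrow> nat) \<Rightarrow> nat list \<Rightarrow> fm \<Rightarrow> bool" where
  "sem M e bs (Eq s t) = (lcT (length bs) s \<and> lcT (length bs) t \<and> evalT bs e s = evalT bs e t)"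
| "sem M e bs (Neq s t) = (\<not> (lcT (length bs) s \<and> lcT (length bs) t) \<or> evalT bs e s \<noteq> evalT bs e t)"
| "sem M e bs (Tr t) = (lcT (length bs) t \<and> evalT bs e t \<in> fst (fst M))"
| "sem M e bs (NTr t) = (lcT (length bs) t \<and> evalT bs e t \<in> snd (fst M))"
| "sem M e bs (Pr t) = (lcT (length bs) t \<and> evalT bs e t \<in> fst (snd M))"
| "sem M e bs (NPr t) = (lcT (length bs) t \<and> evalT bs e t \<in> snd (snd M))"
| "sem M e bs (Conj a b) = (sem M e bs a \<and> sem M e bs b)"
| "sem M e bs (Disj a b) = (sem M e bs a \<or> sem M e bs b)"
| "sem M e bs (All a) = (\<forall>n. sem M e (n # bs) a)"
| "sem M e bs (Ex a) = (\<exists>n. sem M e (n # bs) a)"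

definition consM :: "pmodel \<Rightarrow> bool" where
  "consM M \<longleftrightarrow> fst (fst M) \<inter> snd (fst M) = {} \<and> fst (snd M) \<inter> snd (snd M) = {}"

lemma lcT_mono: "lcT n t \<Longrightarrow> n \<le> m \<Longrightarrow> lcT m t"
  by (induction t) auto

lemma evalT_lc0: "lcT 0 u \<Longrightarrow> evalT bs e u = evalT bs' e u"
  by (induction u) auto

lemma evalT_openT:
  assumes "lcT 0 u" "length bs = k"
  shows "evalT bs e (openT k u t) = evalT (bs @ [evalT [] e u]) e t"
  using assms by (induction t) (auto simp: nth_append intro: evalT_lc0)

lemma lcT_openT:
  assumes "lcT 0 u"
  shows "lcT k (openT k u t) = lcT (Suc k) t"
  using assms by (induction t) (auto intro: lcT_mono)

lemma lcF_openF:
  assumes "lcT 0 u"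
  shows "lcF k (openF k u \<phi>) = lcF (Suc k) \<phi>"
  using assms by (induction \<phi> arbitrary: k) (auto simp: lcT_openT)

lemma sem_openF:
  assumes "lcT 0 u"
  shows "length bs = k \<Longrightarrow> sem M e bs (openF k u \<phi>) = sem M e (bs @ [evalT [] e u]) \<phi>"
  using assms by (induction \<phi> arbitrary: k bs) (auto simp: lcT_openT evalT_openT)

lemma sem_openF0:
  "lcT 0 u \<Longrightarrow> sem M e [] (openF 0 u \<phi>) = sem M e [evalT [] e u] \<phi>"
  using sem_openF[of u "[]" 0] by simp

lemma lcT_num [simp]: "lcT n (num m)"
  by (induction m) auto

lemma evalT_num [simp]: "evalT bs e (num m) = m"
  by (induction m) auto

lemma val_evalT: "evalT [] (\<lambda>_. 0) t = val t"
  by (induction t) auto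

lemma sat_sem: "lcF 0 \<phi> \<Longrightarrow> sat M \<phi> = sem M (\<lambda>_. 0) [] \<phi>"
proof (induction M \<phi> rule: sat.induct)
  case (9 M a)
  then show ?case by (simp add: lcF_openF sem_openF0)
next
  case (10 M a)
  then show ?case by (simp add: lcF_openF sem_openF0)
qed (auto simp: val_evalT)

lemma sem_fv: "(\<forall>x\<in>fvF \<phi>. e x = e' x) \<Longrightarrow> sem M e bs \<phi> = sem M e' bs \<phi>"
proof -
  have T: "(\<forall>x\<in>fvT t. e x = e' x) \<Longrightarrow> evalT bs e t = evalT bs e' t" for t bs
    by (induction t) auto
  show "(\<forall>x\<in>fvF \<phi>. e x = e' x) \<Longrightarrow> sem M e bs \<phi> = sem M e' bs \<phi>"
    by (induction \<phi> arbitrary: bs) (auto simp: T)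
qed

lemma sem_cons: "consM M \<Longrightarrow> sem M e bs \<phi> \<Longrightarrow> \<not> sem M e bs (neg \<phi>)"
  by (induction \<phi> arbitrary: bs) (auto simp: consM_def)

lemma fvs_insert [simp]: "fvs (insert a S) = fvF a \<union> fvs S"
  by (auto simp: fvs_def)

lemma sem_fvs: "x \<notin> fvs S \<Longrightarrow> \<phi> \<in> S \<Longrightarrow> sem M (e(x := n)) bs \<phi> = sem M e bs \<phi>"
  by (rule sem_fv) (auto simp: fvs_def)

lemma sem_fvF: "x \<notin> fvF \<phi> \<Longrightarrow> sem M (e(x := n)) bs \<phi> = sem M e bs \<phi>"
  by (rule sem_fv) auto

lemma soundness:
  "deriv G D \<Longrightarrow> consM M \<Longrightarrow> (\<forall>g\<in>G. sem M e [] g) \<Longrightarrow> (\<exists>d\<in>D. sem M e [] d)"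
proof (induction G D arbitrary: e rule: deriv.induct)
  case (weak G D G' D')
  then show ?case by (meson subsetD)
next
  case (negl G \<phi> D)
  then show ?case using sem_cons by blast
next
  case (alll t \<phi> G D)
  then show ?case by (auto simp: sem_openF0)
next
  case (exr G t \<phi> D)
  then show ?case by (auto simp: sem_openF0)
next
  case (allr G x \<phi> D)
  show ?case
  proof (cases "\<exists>d\<in>D. sem M e [] d")
    case True then show ?thesis by auto
  next
    case False
    have "sem M e [n] \<phi>" for n
    proof -
      have "\<forall>g\<in>G. sem M (e(x:=n)) [] g" using allr.prems allr.hyps sem_fvs by blast
      then have "\<exists>d\<in>insert (openF 0 (Fv x) \<phi>) D. sem M (e(x:=n)) [] d" using allr by blast
      moreover have "\<not> (\<exists>d\<in>D. sem M (e(x:=n)) [] d)" using False allr.hyps sem_fvs by blast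
      ultimately have "sem M (e(x:=n)) [] (openF 0 (Fv x) \<phi>)" by blast
      then show ?thesis using allr.hyps by (simp add: sem_openF0 sem_fvF)
    qed
    then show ?thesis by simp
  qed
next
  case (exl x \<phi> G D)
  show ?case
  proof (cases "\<exists>d\<in>D. sem M e [] d")
    case True then show ?thesis by auto
  next
    case False
    from exl.prems obtain n where n: "sem M e [n] \<phi>" by auto
    have "\<forall>g\<in>G. sem M (e(x:=n)) [] g" using exl.prems exl.hyps sem_fvs by blast
    moreover have "sem M (e(x:=n)) [] (openF 0 (Fv x) \<phi>)"
      using n exl.hyps by (simp add: sem_openF0 sem_fvF)
    ultimately have "\<exists>d\<in>D. sem M (e(x:=n)) [] d" using exl by blast
    then show ?thesis using exl.hyps sem_fvs by blast
  qed
next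
  case (repl G t \<phi> D s)
  show ?case
  proof (cases "lcT 0 t \<and> evalT [] e s = evalT [] e t")
    case True
    then have "sem M e [] (openF 0 t \<phi>) = sem M e [] (openF 0 s \<phi>)"
      using repl.hyps by (simp add: sem_openF0)
    then show ?thesis using repl True by auto
  next
    case False
    then show ?thesis using repl.hyps by auto
  qed
next
  case (ind x \<phi> G D t)
  show ?case
  proof (cases "\<exists>d\<in>D. sem M e [] d")
    case True then show ?thesis by auto
  next
    case False
    have G: "\<forall>g\<in>G. sem M e [] g" using ind.prems by auto
    have "sem M e [n] \<phi>" for n
    proof (induction n)
      case 0
      then show ?case using ind.prems by (simp add: sem_openF0)
    next
      case (Suc n)
      have "\<forall>g\<in>insert (openF 0 (Fv x) \<phi>) G. sem M (e(x:=n)) [] g"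
        using G ind.hyps Suc sem_fvs by (auto simp: sem_openF0 sem_fvF)
      then have "\<exists>d\<in>insert (openF 0 (Sc (Fv x)) \<phi>) D. sem M (e(x:=n)) [] d"
        using ind.IH ind.prems by blast
      moreover have "\<not> (\<exists>d\<in>D. sem M (e(x:=n)) [] d)" using False ind.hyps sem_fvs by blast
      ultimately have "sem M (e(x:=n)) [] (openF 0 (Sc (Fv x)) \<phi>)" by blast
      then show ?case using ind.hyps by (simp add: sem_openF0 sem_fvF)
    qed
    then show ?thesis using ind.hyps by (simp add: sem_openF0)
  qed
qed (auto simp: sem_openF0)



lemma neg_neg [simp]: "neg (neg \<phi>) = \<phi>"
  by (induction \<phi>) auto

lemma neg_openF: "neg (openF k u \<phi>) = openF k u (neg \<phi>)"
  by (induction \<phi> arbitrary: k) auto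

lemma lcF_neg [simp]: "lcF k (neg \<phi>) = lcF k \<phi>"
  by (induction \<phi> arbitrary: k) auto

lemma fvF_neg [simp]: "fvF (neg \<phi>) = fvF \<phi>"
  by (induction \<phi>) auto

lemma sentence_neg [simp]: "sentence (neg \<phi>) = sentence \<phi>"
  by (simp add: sentence_def)

lemma fvT_openT: "fvT (openT k u t) \<subseteq> fvT t \<union> fvT u"
  by (induction t) auto

lemma fvF_openF: "fvF (openF k u \<phi>) \<subseteq> fvF \<phi> \<union> fvT u"
  by (induction \<phi> arbitrary: k) (use fvT_openT in fastforce)+

lemma fvT_num [simp]: "fvT (num n) = {}"
  by (induction n) auto

lemma sentence_openF: "sentence (All a) \<or> sentence (Ex a) \<Longrightarrow> sentence (openF 0 (num n) a)"
  using fvF_openF[of 0 "num n" a] by (auto simp: sentence_def lcF_openF)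

lemma sentence_Conj: "sentence (Conj a b) \<Longrightarrow> sentence a \<and> sentence b"
  by (auto simp: sentence_def)
lemma sentence_Disj: "sentence (Disj a b) \<Longrightarrow> sentence a \<and> sentence b"
  by (auto simp: sentence_def)

lemma le_pm: "(M::pmodel) \<le> N \<longleftrightarrow> fst (fst M) \<subseteq> fst (fst N) \<and> snd (fst M) \<subseteq> snd (fst N)
    \<and> fst (snd M) \<subseteq> fst (snd N) \<and> snd (snd M) \<subseteq> snd (snd N)"
  by (auto simp: less_eq_prod_def)

lemma sat_mono: "M \<le> N \<Longrightarrow> sat M \<phi> \<Longrightarrow> sat N \<phi>"
  by (induction M \<phi> rule: sat.induct) (auto simp: le_pm)

lemma sat_cons: "consM M \<Longrightarrow> sat M \<phi> \<Longrightarrow> \<not> sat M (neg \<phi>)"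
proof (induction M \<phi> rule: sat.induct)
  case (9 M a)
  then show ?case by (auto simp: neg_openF[symmetric])
next
  case (10 M a)
  then show ?case by (auto simp: neg_openF[symmetric])
qed (auto simp: consM_def)

lemma satP_mono: "M \<le> N \<Longrightarrow> satP gn M \<phi> \<Longrightarrow> satP gn N \<phi>"
proof -
  assume le: "M \<le> N" and s: "satP gn M \<phi>"
  have a: "fst (fst M) \<subseteq> fst (fst N)" "snd (fst M) \<subseteq> snd (fst N)" "fst (snd M) \<subseteq> fst (snd N)"
    using le by (auto simp: le_pm)
  show ?thesis using s unfolding satP_def Let_def
    apply (elim conjE)
    apply (intro conjI, assumption)
    apply (elim disjE exE conjE)
    using a apply (simp_all add: subset_iff)
    apply blast+
    done
qed

lemma codes_mono: "(\<And>\<phi>. Q \<phi> \<Longrightarrow> Q' \<phi>) \<Longrightarrow> codes gn Q \<subseteq> codes gn Q'"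
  by (auto simp: codes_def)

lemma mono_Gamma: "mono (GammaTP gn)"
proof (rule monoI)
  fix M N :: pmodel assume "M \<le> N"
  then show "GammaTP gn M \<le> GammaTP gn N"
  proof -
    have "codes gn (sat M) \<subseteq> codes gn (sat N)"
      "codes gn (\<lambda>\<phi>. sat M (neg \<phi>)) \<subseteq> codes gn (\<lambda>\<phi>. sat N (neg \<phi>))"
      "codes gn (satP gn M) \<subseteq> codes gn (satP gn N)"
      "codes gn (\<lambda>\<phi>. sat M (Disj \<phi> (neg \<phi>))) \<subseteq> codes gn (\<lambda>\<phi>. sat N (Disj \<phi> (neg \<phi>)))"
      by (rule codes_mono; use \<open>M \<le> N\<close> sat_mono satP_mono in blast)+
    then show ?thesis unfolding GammaTP_def le_pm by simp
  qed
qed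

lemma codes_mem: "inj gn \<Longrightarrow> gn \<phi> \<in> codes gn Q \<longleftrightarrow> sentence \<phi> \<and> Q \<phi>"
  by (auto simp: codes_def dest: injD)

lemma codes_memE: "n \<in> codes gn Q \<Longrightarrow> (\<And>\<phi>. n = gn \<phi> \<Longrightarrow> sentence \<phi> \<Longrightarrow> Q \<phi> \<Longrightarrow> P) \<Longrightarrow> P"
  by (auto simp: codes_def)

lemma bp_T:
  assumes "consM Z" "base_paradoxical gn \<psi>"
  shows "(sat Z \<psi> \<longrightarrow> gn \<psi> \<in> snd (fst Z)) \<and> (sat Z (neg \<psi>) \<longrightarrow> gn \<psi> \<in> fst (fst Z))"
proof -
  have s: "sentence \<psi>" and d1: "deriv {\<psi>} {NTr (num (gn \<psi>))}"
    and d2: "deriv {neg \<psi>} {Tr (num (gn \<psi>))}"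
    using assms(2) by (auto simp: base_paradoxical_def)
  have l: "lcF 0 \<psi>" using s by (simp add: sentence_def)
  show ?thesis
  proof (intro conjI impI)
    assume "sat Z \<psi>"
    then have "sem Z (\<lambda>_. 0) [] \<psi>" using l sat_sem by blast
    then have "sem Z (\<lambda>_. 0) [] (NTr (num (gn \<psi>)))" using soundness[OF d1 assms(1)] by auto
    then show "gn \<psi> \<in> snd (fst Z)" by simp
  next
    assume "sat Z (neg \<psi>)"
    then have "sem Z (\<lambda>_. 0) [] (neg \<psi>)" using l sat_sem lcF_neg by blast
    then have "sem Z (\<lambda>_. 0) [] (Tr (num (gn \<psi>)))" using soundness[OF d2 assms(1)] by auto
    then show "gn \<psi> \<in> fst (fst Z)" by simp
  qed
qed



definition Kc :: "pmodel \<Rightarrow> pmodel \<Rightarrow> bool" where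
  "Kc A B \<longleftrightarrow> fst (snd A) \<inter> (fst (fst B) \<union> snd (fst B) \<union> snd (snd B)) = {}"

definition Uc :: "(fm \<Rightarrow> nat) \<Rightarrow> pmodel \<Rightarrow> bool" where
  "Uc gn M \<longleftrightarrow> (\<forall>\<psi>. base_paradoxical gn \<psi> \<longrightarrow> gn \<psi> \<notin> fst (fst M) \<and> gn \<psi> \<notin> snd (fst M))"

definition Inv :: "(fm \<Rightarrow> nat) \<Rightarrow> pmodel \<Rightarrow> bool" where
  "Inv gn M \<longleftrightarrow> consM M \<and> Uc gn M \<and> Kc M M"

lemma Gamma_comps:
  "fst (fst (GammaTP gn M)) = codes gn (sat M)"
  "snd (fst (GammaTP gn M)) = codes gn (\<lambda>\<phi>. sat M (neg \<phi>))"
  "fst (snd (GammaTP gn M)) = codes gn (satP gn M)"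
  "snd (snd (GammaTP gn M)) = codes gn (\<lambda>\<phi>. sat M (Disj \<phi> (neg \<phi>)))"
  by (simp_all add: GammaTP_def)

lemma bp_undec:
  assumes "consM Z" "Uc gn Z" "base_paradoxical gn \<phi> \<or> base_paradoxical gn (neg \<phi>)"
  shows "\<not> sat Z \<phi> \<and> \<not> sat Z (neg \<phi>)"
  using bp_T[OF assms(1), of gn \<phi>] bp_T[OF assms(1), of gn "neg \<phi>"] assms(2,3)
  unfolding Uc_def by auto

lemma KS:
  assumes inj: "inj gn" and I: "Inv gn Z" and WZ: "W \<le> Z" and Wf: "W \<le> GammaTP gn W"
    and K: "Kc W (GammaTP gn Z)" and s: "sentence \<phi>" and p: "satP gn W \<phi>"
  shows "\<not> sat Z \<phi> \<and> \<not> sat Z (neg \<phi>)"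
proof -
  have cons: "consM Z" and U: "Uc gn Z" and KZ: "Kc Z Z" using I by (auto simp: Inv_def)
  have P: "\<not> sat Z a \<and> \<not> sat Z (neg a)" if "gn a \<in> fst (snd W)" "sentence a" for a
    using K that unfolding Kc_def by (auto simp: Gamma_comps codes_mem[OF inj])
  have Tp: "sat Z a \<and> \<not> sat Z (neg a)" if "gn a \<in> fst (fst W)" for a
  proof -
    have "gn a \<in> codes gn (sat W)" using Wf that by (auto simp: le_pm Gamma_comps)
    then have "sat W a" by (simp add: codes_mem[OF inj])
    then have "sat Z a" using sat_mono WZ by blast
    then show ?thesis using sat_cons cons by blast
  qed
  have Tn: "sat Z (neg a) \<and> \<not> sat Z a" if "gn a \<in> snd (fst W)" for a
  proof -
    have "gn a \<in> codes gn (\<lambda>\<phi>. sat W (neg \<phi>))" using Wf that by (auto simp: le_pm Gamma_comps)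
    then have "sat W (neg a)" by (simp add: codes_mem[OF inj])
    then have "sat Z (neg a)" using sat_mono WZ by blast
    then show ?thesis using sat_cons[OF cons, of "neg a"] by simp
  qed
  have Tr: "n \<notin> fst (fst Z) \<and> n \<notin> snd (fst Z)" if "n \<in> fst (snd W)" for n
    using KZ WZ that unfolding Kc_def le_pm by blast
  let ?Tp = "fst (fst W)" and ?Tn = "snd (fst W)" and ?Pp = "fst (snd W)"
  have c1: ?thesis if "base_paradoxical gn \<phi> \<or> base_paradoxical gn (neg \<phi>)"
    using bp_undec[OF cons U that] .
  have c2: ?thesis if "\<phi> = Tr t" "val t \<in> ?Pp" for t
    using Tr that by simp
  have c3: ?thesis if "\<phi> = NTr t" "val t \<in> ?Pp" for t
    using Tr that by simp
  have c4: ?thesis if "\<phi> = Conj a b" "(gn a \<in> ?Pp \<and> gn b \<in> ?Pp) \<or> (gn a \<in> ?Tp \<and> gn b \<in> ?Pp)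
       \<or> (gn b \<in> ?Tp \<and> gn a \<in> ?Pp)" for a b
  proof -
    have sa: "sentence a" and sb: "sentence b" using s that(1) sentence_Conj by blast+
    have A: "(\<not> sat Z a \<or> \<not> sat Z b) \<and> \<not> sat Z (neg a) \<and> \<not> sat Z (neg b)"
      using that(2) P[OF _ sa] P[OF _ sb] Tp[of a] Tp[of b] by blast
    then show ?thesis using that(1) by simp
  qed
  have c5: ?thesis if "\<phi> = Disj a b" "(gn a \<in> ?Pp \<and> gn b \<in> ?Pp) \<or> (gn a \<in> ?Tn \<and> gn b \<in> ?Pp)
       \<or> (gn b \<in> ?Tn \<and> gn a \<in> ?Pp)" for a b
  proof -
    have sa: "sentence a" and sb: "sentence b" using s that(1) sentence_Disj by blast+
    have A: "(\<not> sat Z (neg a) \<or> \<not> sat Z (neg b)) \<and> \<not> sat Z a \<and> \<not> sat Z b"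
      using that(2) P[OF _ sa] P[OF _ sb] Tn[of a] Tn[of b] by blast
    then show ?thesis using that(1) by simp
  qed
  have c6: ?thesis if h1: "\<phi> = All a" and h2: "\<exists>y. gn (openF 0 (num y) a) \<in> ?Pp"
    and h3: "\<forall>y. gn (openF 0 (num y) a) \<in> ?Pp \<or> gn (openF 0 (num y) a) \<in> ?Tp" for a
  proof -
    have se: "sentence (openF 0 (num y) a)" for y using s h1 sentence_openF by blast
    obtain y where y: "gn (openF 0 (num y) a) \<in> ?Pp" using h2 by blast
    have "\<not> sat Z (All a)" using P[OF y se] by auto
    moreover have "\<not> sat Z (neg (openF 0 (num n) a))" for n
      using h3 P se Tp by blast
    then have "\<not> sat Z (neg (All a))" by (simp add: neg_openF[symmetric])
    ultimately show ?thesis using h1 by simp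
  qed
  have c7: ?thesis if h1: "\<phi> = Ex a" and h2: "\<exists>y. gn (openF 0 (num y) a) \<in> ?Pp"
    and h3: "\<forall>y. gn (openF 0 (num y) a) \<in> ?Pp \<or> gn (openF 0 (num y) a) \<in> ?Tn" for a
  proof -
    have se: "sentence (openF 0 (num y) a)" for y using s h1 sentence_openF by blast
    obtain y where y: "gn (openF 0 (num y) a) \<in> ?Pp" using h2 by blast
    have "\<not> (\<forall>n. sat Z (neg (openF 0 (num n) a)))" using P[OF y se] by blast
    then have "\<not> sat Z (neg (Ex a))" by (simp add: neg_openF[symmetric])
    moreover have "\<not> sat Z (openF 0 (num n) a)" for n
      using h3 P se Tn by blast
    then have "\<not> sat Z (Ex a)" by simp
    ultimately show ?thesis using h1 by simp
  qed
  show ?thesis using p unfolding satP_def Let_def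
    apply (elim conjE disjE exE)
    subgoal by (rule c1) simp
    subgoal by (rule c1) simp
    subgoal by (rule c2)
    subgoal by (rule c3)
    subgoal by (rule c4) blast+
    subgoal by (rule c4) blast+
    subgoal by (rule c4) blast+
    subgoal by (rule c5) blast+
    subgoal by (rule c5) blast+
    subgoal by (rule c5) blast+
    subgoal by (rule c6) blast+
    subgoal by (rule c7) blast+
    done
qed



lemma Sup_comps:
  "fst (fst (Sup A :: pmodel)) = (\<Union>x\<in>A. fst (fst x))"
  "snd (fst (Sup A :: pmodel)) = (\<Union>x\<in>A. snd (fst x))"
  "fst (snd (Sup A :: pmodel)) = (\<Union>x\<in>A. fst (snd x))"
  "snd (snd (Sup A :: pmodel)) = (\<Union>x\<in>A. snd (snd x))"
  by (simp_all add: fst_Sup snd_Sup image_image)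

lemma Kc_Sup: "(\<And>x. x \<in> A \<Longrightarrow> Kc x B) \<Longrightarrow> Kc (Sup A) B"
  unfolding Kc_def Sup_comps by blast

lemma KS_K:
  assumes inj: "inj gn" and I: "Inv gn Z" and WZ: "W \<le> Z" and Wf: "W \<le> GammaTP gn W"
    and K: "Kc W (GammaTP gn Z)"
  shows "Kc (GammaTP gn W) (GammaTP gn Z)"
proof -
  have *: "\<not> sat Z \<phi> \<and> \<not> sat Z (neg \<phi>)" if "sentence \<phi>" "satP gn W \<phi>" for \<phi>
    using KS[OF inj I WZ Wf K that] .
  show ?thesis
    unfolding Kc_def Gamma_comps
  proof (rule equals0I)
    fix n assume n: "n \<in> codes gn (satP gn W) \<inter> (codes gn (sat Z) \<union> codes gn (\<lambda>\<phi>. sat Z (neg \<phi>))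
      \<union> codes gn (\<lambda>\<phi>. sat Z (Disj \<phi> (neg \<phi>))))"
    then obtain \<phi> where \<phi>: "n = gn \<phi>" "sentence \<phi>" "satP gn W \<phi>"
      by (auto elim: codes_memE)
    then have "sat Z \<phi> \<or> sat Z (neg \<phi>)" using n by (auto simp: codes_mem[OF inj])
    then show False using * \<phi> by blast
  qed
qed

context
  fixes gn :: "fm \<Rightarrow> nat"
  assumes inj: "inj gn"
begin

abbreviation "F \<equiv> GammaTP gn"

lemma monoF: "monotone (\<le>) (\<le>) F"
  using mono_Gamma[of gn] unfolding mono_def monotone_def .

lemma Inv_step:
  assumes Z: "Z \<in> ccpo_class.iterates F" and I: "Inv gn Z"
  shows "Inv gn (F Z)"
proof -
  have cons: "consM Z" and U: "Uc gn Z" and KZ: "Kc Z Z" using I by (auto simp: Inv_def)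
  have inner: "W \<le> Z \<Longrightarrow> Kc W (F Z)" if "W \<in> ccpo_class.iterates F" for W
    using that
  proof (induction W rule: ccpo_class.iterates.induct)
    case (step x)
    have xf: "x \<le> F x" using iterates_le_f[OF step.hyps(1) monoF] .
    then have "x \<le> Z" using step.prems by (rule order_trans)
    then show ?case using KS_K[OF inj I _ xf] step.IH by blast
  next
    case (Sup M)
    show ?case
    proof (rule Kc_Sup)
      fix x assume "x \<in> M"
      then have "x \<le> Z" using Sup.prems by (meson Sup_upper order_trans)
      then show "Kc x (F Z)" using Sup.IH \<open>x \<in> M\<close> by blast
    qed
  qed
  have Zf: "Z \<le> F Z" using iterates_le_f[OF Z monoF] .
  have K1: "Kc (F Z) (F Z)" using KS_K[OF inj I order_refl Zf inner[OF Z order_refl]] .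
  have c: "consM (F Z)"
    unfolding consM_def
  proof
    show "fst (fst (F Z)) \<inter> snd (fst (F Z)) = {}"
      unfolding Gamma_comps using sat_cons[OF cons]
      by (auto simp: codes_def dest: injD[OF inj])
    show "fst (snd (F Z)) \<inter> snd (snd (F Z)) = {}"
      using K1 unfolding Kc_def by blast
  qed
  have u: "Uc gn (F Z)"
    unfolding Uc_def Gamma_comps
  proof (intro allI impI)
    fix \<psi> assume bp: "base_paradoxical gn \<psi>"
    show "gn \<psi> \<notin> codes gn (sat Z) \<and> gn \<psi> \<notin> codes gn (\<lambda>\<phi>. sat Z (neg \<phi>))"
      using bp_T[OF cons bp] U bp unfolding Uc_def by (auto simp: codes_mem[OF inj])
  qed
  show ?thesis using c u K1 by (simp add: Inv_def)
qed

lemma Inv_Sup: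
  assumes ch: "Complete_Partial_Order.chain (\<le>) M" and I: "\<And>x. x \<in> M \<Longrightarrow> Inv gn x"
  shows "Inv gn (Sup M)"
proof -
  have big: "\<exists>y\<in>M. x1 \<le> y \<and> x2 \<le> y" if "x1 \<in> M" "x2 \<in> M" for x1 x2
    using ch that unfolding Complete_Partial_Order.chain_def by blast
  have c: "consM (Sup M)"
    unfolding consM_def Sup_comps
  proof (intro conjI equals0I)
    fix n assume "n \<in> (\<Union>x\<in>M. fst (fst x)) \<inter> (\<Union>x\<in>M. snd (fst x))"
    then obtain x1 x2 where "x1 \<in> M" "x2 \<in> M" "n \<in> fst (fst x1)" "n \<in> snd (fst x2)" by blast
    with big obtain y where "y \<in> M" "x1 \<le> y" "x2 \<le> y" by blast
    then show False using I[of y] \<open>n \<in> fst (fst x1)\<close> \<open>n \<in> snd (fst x2)\<close>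
      unfolding Inv_def consM_def le_pm by blast
  next
    fix n assume "n \<in> (\<Union>x\<in>M. fst (snd x)) \<inter> (\<Union>x\<in>M. snd (snd x))"
    then obtain x1 x2 where "x1 \<in> M" "x2 \<in> M" "n \<in> fst (snd x1)" "n \<in> snd (snd x2)" by blast
    with big obtain y where "y \<in> M" "x1 \<le> y" "x2 \<le> y" by blast
    then show False using I[of y] \<open>n \<in> fst (snd x1)\<close> \<open>n \<in> snd (snd x2)\<close>
      unfolding Inv_def consM_def le_pm by blast
  qed
  have u: "Uc gn (Sup M)"
    using I unfolding Uc_def Inv_def Sup_comps by blast
  have k: "Kc (Sup M) (Sup M)"
    unfolding Kc_def Sup_comps
  proof (rule equals0I)
    fix n assume "n \<in> (\<Union>x\<in>M. fst (snd x)) \<inter> ((\<Union>x\<in>M. fst (fst x)) \<union> (\<Union>x\<in>M. snd (fst x)) \<union> (\<Union>x\<in>M. snd (snd x)))"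
    then obtain x1 x2 where "x1 \<in> M" "x2 \<in> M" "n \<in> fst (snd x1)"
      "n \<in> fst (fst x2) \<union> snd (fst x2) \<union> snd (snd x2)" by blast
    with big obtain y where "y \<in> M" "x1 \<le> y" "x2 \<le> y" by blast
    then show False using I[of y] \<open>n \<in> fst (snd x1)\<close> \<open>n \<in> fst (fst x2) \<union> snd (fst x2) \<union> snd (snd x2)\<close>
      unfolding Inv_def Kc_def le_pm by blast
  qed
  show ?thesis using c u k by (simp add: Inv_def)
qed

lemma Inv_iterates: "x \<in> ccpo_class.iterates F \<Longrightarrow> Inv gn x"
proof (induction x rule: ccpo_class.iterates.induct)
  case (step x)
  then show ?case using Inv_step by blast
next
  case (Sup M)
  then show ?case using Inv_Sup by blast
qed

lemma Inv_lfp: "Inv gn (lfp F)"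
proof -
  have "lfp F = ccpo_class.fixp F" using lfp_eq_fixp[OF mono_Gamma] .
  moreover have "ccpo_class.fixp F \<in> ccpo_class.iterates F" using iterates_fixp[OF monoF] .
  ultimately show ?thesis using Inv_iterates by simp
qed

end

theorem mainTheorem8:
  fixes gn :: "fm \<Rightarrow> nat"
  assumes "inj gn"
  defines "TP \<equiv> lfp (GammaTP gn)"
  shows "fst (fst TP) \<inter> snd (fst TP) = {}
       \<and> fst (snd TP) \<inter> snd (snd TP) = {}
       \<and> (\<forall>\<phi>. sentence \<phi> \<longrightarrow> \<not> sat TP (Disj \<phi> (neg \<phi>)) \<or> \<not> satP gn TP \<phi>)"
proof -
  have I: "Inv gn TP" unfolding TP_def using Inv_lfp[OF assms(1)] .
  then have c: "consM TP" by (simp add: Inv_def)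
  have fp: "GammaTP gn TP = TP" unfolding TP_def using lfp_fixpoint[OF mono_Gamma] .
  have "\<not> sat TP (Disj \<phi> (neg \<phi>)) \<or> \<not> satP gn TP \<phi>" if s: "sentence \<phi>" for \<phi>
  proof (rule ccontr)
    assume "\<not> ?thesis"
    then have "gn \<phi> \<in> snd (snd (GammaTP gn TP))" "gn \<phi> \<in> fst (snd (GammaTP gn TP))"
      using s by (auto simp: Gamma_comps codes_mem[OF assms(1)])
    then show False using c fp unfolding consM_def by auto
  qed
  then show ?thesis using c unfolding consM_def by blast
qed

end
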